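(* Fix an index $i$ and suppose its list is involved in $q_i$ good queries, each for an object present in the table. Let $\mathcal{A}^{\mathrm{ins}}_i$ be the algorithm's total RB cost for inserting the good objects of list $i$, and let $\mathcal{B}_i$ be the adversary's total RB cost for bad queries and bad insertions in list $i$. Then, for these $q_i$ queries, the algorithm's total RB cost and its total latency are each at most $$\mathcal{A}^{\mathrm{ins}}_i+\ell_i\big(q_i+\sqrt{2q_i\,\mathcal{B}_i}\big).$$
   Context: Model. A hash table has $t$ indices with chaining. The objects at an index form a list, new objects are appended at the tail, and $L_i$ denotes the current number of objects in the list at index $i$. The depth of an object is its position counted from the head of its list (the head has depth $1$). Algorithm \textsc{Depth Charge}: - Inserting at index $i$ costs the inserter an RB (resource-burning) cost of $L_i+1$ and has latency $1$. - Querying a present object at depth $\Delta$ costs $\Delta$, has latency $\Delta$, and then moves the object to the head of its list (move-to-front). - Querying an absent object costs $L_i$. - Deletions are handled like queries, except that the found object is removed. Good objects (inserted by clients) go to uniformly random indices; clients query only good objects. A Byzantine adversary inserts bad objects at indices of its choice, may query any object, and schedules all requests. $\ell_i$ is the maximum number of good objects ever present in the list at index $i$. *)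

theory Defs
  imports Complex_Main
begin

text \<open>Model of the single list at a fixed index i under Depth Charge.
  An object is a pair (identifier, is_good). The list is ordered head first.\<close>

type_synonym obj = "nat \<times> bool"

datatype req =
    GIns nat   \<comment> \<open>client inserts a good object\<close>
  | BIns nat   \<comment> \<open>adversary inserts a bad object\<close>
  | GQry nat   \<comment> \<open>client queries a good object\<close>
  | GDel nat   \<comment> \<open>client deletes a good object\<close>
  | BQry nat   \<comment> \<open>adversary queries any object (present or absent)\<close>
  | BDel nat   \<comment> \<open>adversary deletes any object (present or absent)\<close>

definition present :: "nat \<Rightarrow> obj list \<Rightarrow> bool" where
  "present x s \<longleftrightarrow> x \<in> fst ` set s"

text \<open>Depth of object x (head has depth 1).\<close>
definition depth :: "nat \<Rightarrow> obj list \<Rightarrow> nat" where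
  "depth x s = length (takeWhile (\<lambda>y. fst y \<noteq> x) s) + 1"

definition mtf :: "nat \<Rightarrow> obj list \<Rightarrow> obj list" where
  "mtf x s = filter (\<lambda>y. fst y = x) s @ filter (\<lambda>y. fst y \<noteq> x) s"

definition remove_obj :: "nat \<Rightarrow> obj list \<Rightarrow> obj list" where
  "remove_obj x s = filter (\<lambda>y. fst y \<noteq> x) s"

fun step :: "obj list \<Rightarrow> req \<Rightarrow> obj list" where
  "step s (GIns x) = s @ [(x, True)]"
| "step s (BIns x) = s @ [(x, False)]"
| "step s (GQry x) = (if present x s then mtf x s else s)"
| "step s (BQry x) = (if present x s then mtf x s else s)"
| "step s (GDel x) = (if present x s then remove_obj x s else s)"
| "step s (BDel x) = (if present x s then remove_obj x s else s)"

fun ok :: "obj list \<Rightarrow> req \<Rightarrow> bool" where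
  "ok s (GIns x) = (\<not> present x s)"
| "ok s (BIns x) = (\<not> present x s)"
| "ok s (GQry x) = ((x, True) \<in> set s)"
| "ok s (GDel x) = ((x, True) \<in> set s)"
| "ok s (BQry x) = True"
| "ok s (BDel x) = True"

definition qcost :: "nat \<Rightarrow> obj list \<Rightarrow> nat" where
  "qcost x s = (if present x s then depth x s else length s)"

text \<open>Algorithm's RB cost for inserting good objects (L_i + 1).\<close>
fun good_ins_cost :: "obj list \<Rightarrow> req \<Rightarrow> nat" where
  "good_ins_cost s (GIns x) = length s + 1"
| "good_ins_cost s _ = 0"

fun good_qry_cost :: "obj list \<Rightarrow> req \<Rightarrow> nat" where
  "good_qry_cost s (GQry x) = qcost x s"
| "good_qry_cost s _ = 0"

fun good_qry_latency :: "obj list \<Rightarrow> req \<Rightarrow> nat" where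
  "good_qry_latency s (GQry x) = (if present x s then depth x s else 0)"
| "good_qry_latency s _ = 0"

fun good_qry_count :: "obj list \<Rightarrow> req \<Rightarrow> nat" where
  "good_qry_count s (GQry x) = 1"
| "good_qry_count s _ = 0"

fun bad_cost :: "obj list \<Rightarrow> req \<Rightarrow> nat" where
  "bad_cost s (BIns x) = length s + 1"
| "bad_cost s (BQry x) = qcost x s"
| "bad_cost s (BDel x) = qcost x s"
| "bad_cost s _ = 0"

fun valid :: "obj list \<Rightarrow> req list \<Rightarrow> bool" where
  "valid s [] = True"
| "valid s (r # rs) = (ok s r \<and> valid (step s r) rs)"

fun total :: "(obj list \<Rightarrow> req \<Rightarrow> nat) \<Rightarrow> obj list \<Rightarrow> req list \<Rightarrow> nat" where
  "total f s [] = 0"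
| "total f s (r # rs) = f s r + total f (step s r) rs"

definition ngood :: "obj list \<Rightarrow> nat" where
  "ngood s = length (filter snd s)"

text \<open>Maximum number of good objects ever present (ell_i).\<close>
fun maxgood :: "obj list \<Rightarrow> req list \<Rightarrow> nat" where
  "maxgood s [] = ngood s"
| "maxgood s (r # rs) = max (ngood s) (maxgood (step s r) rs)"

end

theory Submission
  imports Defs
begin

definition badahead :: "nat \<Rightarrow> obj list \<Rightarrow> nat" where
  "badahead g s = length (filter (\<lambda>y. \<not> snd y) (takeWhile (\<lambda>y. fst y \<noteq> g) s))"

definition nbad :: "obj list \<Rightarrow> nat" where
  "nbad s = length (filter (\<lambda>y. \<not> snd y) s)"

definition PhiU :: "obj list \<Rightarrow> (nat \<Rightarrow> nat) \<Rightarrow> nat" where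
  "PhiU s u = sum_list (map (\<lambda>y. u (fst y)) (filter snd s))"

definition Inv :: "obj list \<Rightarrow> (nat \<Rightarrow> nat) \<Rightarrow> (nat \<Rightarrow> nat) \<Rightarrow> bool" where
  "Inv s u C \<longleftrightarrow> (\<forall>g. (g, True) \<in> set s \<longrightarrow>
     (badahead g s - u g) * (badahead g s - u g + 1) \<le> 2 * C g)"

lemma decomp:
  assumes "(x,v) \<in> set s" "distinct (map fst s)"
  shows "\<exists>xs ys. s = xs @ (x,v) # ys \<and> x \<notin> fst ` set xs \<and> x \<notin> fst ` set ys"
proof -
  obtain xs ys where s: "s = xs @ (x,v) # ys" using split_list[OF assms(1)] by blast
  with assms(2) show ?thesis by auto
qed

lemma tw_xs: "x \<notin> fst ` set xs \<Longrightarrow> takeWhile (\<lambda>y. fst y \<noteq> x) (xs @ (x,v) # ys) = xs"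
  by (subst takeWhile_append2) auto

lemma filter_eq_nil: "x \<notin> fst ` set xs \<Longrightarrow> filter (\<lambda>y. fst y = x) xs = []"
  by (induction xs) auto

lemma filter_neq_all: "x \<notin> fst ` set xs \<Longrightarrow> filter (\<lambda>y. fst y \<noteq> x) xs = xs"
  by (induction xs) auto

lemma mtf_dec: "x \<notin> fst ` set xs \<Longrightarrow> x \<notin> fst ` set ys \<Longrightarrow>
   mtf x (xs @ (x,v) # ys) = (x,v) # xs @ ys"
  by (simp add: mtf_def filter_eq_nil filter_neq_all)

lemma rem_dec: "x \<notin> fst ` set xs \<Longrightarrow> x \<notin> fst ` set ys \<Longrightarrow>
   remove_obj x (xs @ (x,v) # ys) = xs @ ys"
  by (simp add: remove_obj_def filter_neq_all)

lemma depth_dec: "x \<notin> fst ` set xs \<Longrightarrow> depth x (xs @ (x,v) # ys) = length xs + 1"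
  by (simp add: depth_def tw_xs)

lemma ba_cons_other: "fst z \<noteq> g \<Longrightarrow> badahead g (z # t) = (if snd z then 0 else 1) + badahead g t"
  by (simp add: badahead_def)

lemma ba_cons_self: "badahead g ((g,v) # t) = 0"
  by (simp add: badahead_def)

lemma ba_append_notin: "g \<notin> fst ` set a \<Longrightarrow> badahead g (a @ t) = nbad a + badahead g t"
  by (induction a) (auto simp: badahead_def nbad_def)

lemma ba_append_in: "g \<in> fst ` set a \<Longrightarrow> badahead g (a @ t) = badahead g a"
  by (induction a) (auto simp: badahead_def)

lemma ba_lt: "g \<in> fst ` set a \<Longrightarrow> badahead g a + 1 \<le> length a"
proof (induction a)
  case Nil then show ?case by simp
next
  case (Cons z a)
  show ?case
  proof (cases "fst z = g")
    case True then show ?thesis by (simp add: badahead_def)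
  next
    case False
    then have "g \<in> fst ` set a" using Cons.prems by auto
    with Cons.IH False show ?thesis by (simp add: ba_cons_other)
  qed
qed

lemma nbad_ngood: "length a = nbad a + ngood a"
  by (induction a) (auto simp: nbad_def ngood_def)

lemma PhiU_upd: "x \<notin> fst ` set t \<Longrightarrow> PhiU t (u(x:=a)) = PhiU t u"
  by (induction t) (auto simp: PhiU_def)

lemma PhiU_Nil[simp]: "PhiU [] u = 0"
  by (simp add: PhiU_def)

lemma PhiU_app: "PhiU (a @ b) u = PhiU a u + PhiU b u"
  by (simp add: PhiU_def)

lemma PhiU_cons: "PhiU (z # b) u = (if snd z then u (fst z) else 0) + PhiU b u"
  by (simp add: PhiU_def)

lemma PhiU_plus: "PhiU t (\<lambda>g. C g + d) = PhiU t C + ngood t * d"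
  by (induction t) (auto simp: PhiU_def ngood_def)

lemma arith1:
  fixes a u c d :: nat
  assumes "(a - u) * (a - u + 1) \<le> 2 * c" "a + 2 \<le> d"
  shows "(a + 1 - u) * (a + 1 - u + 1) \<le> 2 * (c + d)"
proof (cases "a + 1 \<le> u")
  case True then show ?thesis by simp
next
  case False
  define x where "x = a - u"
  have e: "a + 1 - u = x + 1" using False x_def by simp
  have "x \<le> a" using x_def by simp
  have "(x+1)*(x+1+1) = x*(x+1) + 2*(x+1)" by (simp add: algebra_simps)
  also have "\<dots> \<le> 2*c + 2*d" using assms \<open>x \<le> a\<close> x_def by simp
  finally show ?thesis using e by simp
qed


lemma ba_mtf_good:
  assumes "x \<notin> fst ` set xs" "x \<notin> fst ` set ys" "g \<noteq> x" "g \<in> fst ` set (xs @ ys)"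
  shows "badahead g ((x,True) # xs @ ys) = badahead g (xs @ (x,True) # ys)"
proof (cases "g \<in> fst ` set xs")
  case True then show ?thesis using assms by (simp add: ba_cons_other ba_append_in)
next
  case False then show ?thesis using assms
    by (simp add: ba_cons_other ba_append_notin)
qed

lemma ba_mtf_bad:
  assumes "x \<notin> fst ` set xs" "x \<notin> fst ` set ys" "g \<noteq> x" "g \<in> fst ` set (xs @ ys)"
  shows "badahead g ((x,False) # xs @ ys) = badahead g (xs @ (x,False) # ys) \<or>
    (badahead g ((x,False) # xs @ ys) = badahead g (xs @ (x,False) # ys) + 1 \<and>
     badahead g (xs @ (x,False) # ys) + 2 \<le> length xs + 1)"
proof (cases "g \<in> fst ` set xs")
  case True then show ?thesis using assms ba_lt[OF True] by (simp add: ba_cons_other ba_append_in)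
next
  case False then show ?thesis using assms
    by (simp add: ba_cons_other ba_append_notin)
qed

lemma ba_rem:
  assumes "g \<noteq> x"
  shows "badahead g (xs @ ys) \<le> badahead g (xs @ (x,v) # ys)"
proof (cases "g \<in> fst ` set xs")
  case True then show ?thesis by (simp add: ba_append_in)
next
  case False then show ?thesis using assms
    by (simp add: ba_cons_other ba_append_notin)
qed

lemma mono_term:
  fixes a b u :: nat
  assumes "a \<le> b" shows "(a - u) * (a - u + 1) \<le> (b - u) * (b - u + 1)"
  using assms by (intro mult_le_mono) auto

lemma inv_gq:
  assumes "Inv (xs @ (x,True) # ys) u C" "x \<notin> fst ` set xs" "x \<notin> fst ` set ys"
  shows "Inv ((x,True) # xs @ ys) (u(x:=0)) (C(x:=0))"
  unfolding Inv_def
proof (intro allI impI)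
  fix g assume g: "(g, True) \<in> set ((x, True) # xs @ ys)"
  show "(badahead g ((x, True) # xs @ ys) - (u(x := 0)) g) *
          (badahead g ((x, True) # xs @ ys) - (u(x := 0)) g + 1) \<le> 2 * (C(x := 0)) g"
  proof (cases "g = x")
    case True then show ?thesis by (simp add: ba_cons_self)
  next
    case False
    then have m: "g \<in> fst ` set (xs @ ys)" "(g,True) \<in> set (xs @ (x,True) # ys)" using g by force+
    show ?thesis using assms(1) m False ba_mtf_good[OF assms(2,3) False m(1)]
      unfolding Inv_def by auto
  qed
qed

lemma inv_bq_good:
  assumes "Inv (xs @ (x,True) # ys) u C" "x \<notin> fst ` set xs" "x \<notin> fst ` set ys"
  shows "Inv ((x,True) # xs @ ys) u C"
  unfolding Inv_def
proof (intro allI impI)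
  fix g assume g: "(g, True) \<in> set ((x, True) # xs @ ys)"
  show "(badahead g ((x, True) # xs @ ys) - u g) *
          (badahead g ((x, True) # xs @ ys) - u g + 1) \<le> 2 * C g"
  proof (cases "g = x")
    case True then show ?thesis by (simp add: ba_cons_self)
  next
    case False
    then have m: "g \<in> fst ` set (xs @ ys)" "(g,True) \<in> set (xs @ (x,True) # ys)" using g by force+
    show ?thesis using assms(1) m False ba_mtf_good[OF assms(2,3) False m(1)]
      unfolding Inv_def by auto
  qed
qed

lemma inv_bq_bad:
  assumes "Inv (xs @ (x,False) # ys) u C" "x \<notin> fst ` set xs" "x \<notin> fst ` set ys"
  shows "Inv ((x,False) # xs @ ys) u (\<lambda>g. C g + (length xs + 1))"
  unfolding Inv_def
proof (intro allI impI)
  fix g assume g: "(g, True) \<in> set ((x, False) # xs @ ys)"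
  then have ne: "g \<noteq> x" using assms(2,3) by force
  have m: "g \<in> fst ` set (xs @ ys)" "(g,True) \<in> set (xs @ (x,False) # ys)" using g by force+
  have I: "(badahead g (xs @ (x,False) # ys) - u g) * (badahead g (xs @ (x,False) # ys) - u g + 1)
      \<le> 2 * C g" using assms(1) m unfolding Inv_def by auto
  show "(badahead g ((x, False) # xs @ ys) - u g) *
          (badahead g ((x, False) # xs @ ys) - u g + 1) \<le> 2 * (C g + (length xs + 1))"
    using ba_mtf_bad[OF assms(2,3) ne m(1)]
  proof
    assume "badahead g ((x, False) # xs @ ys) = badahead g (xs @ (x, False) # ys)"
    then show ?thesis using I by simp
  next
    assume h: "badahead g ((x, False) # xs @ ys) = badahead g (xs @ (x, False) # ys) + 1 \<and>
     badahead g (xs @ (x, False) # ys) + 2 \<le> length xs + 1"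
    have "badahead g (xs @ (x, False) # ys) + 2 \<le> length xs + 1" using h by simp
    from arith1[OF I this] h show ?thesis by simp
  qed
qed

lemma inv_del:
  assumes "Inv (xs @ (x,v) # ys) u C" "x \<notin> fst ` set xs" "x \<notin> fst ` set ys"
  shows "Inv (xs @ ys) u C"
  unfolding Inv_def
proof (intro allI impI)
  fix g assume g: "(g, True) \<in> set (xs @ ys)"
  then have ne: "g \<noteq> x" using assms(2,3) by force
  have m: "(g,True) \<in> set (xs @ (x,v) # ys)" using g by force
  have I: "(badahead g (xs @ (x,v) # ys) - u g) * (badahead g (xs @ (x,v) # ys) - u g + 1)
      \<le> 2 * C g" using assms(1) m unfolding Inv_def by auto
  show "(badahead g (xs @ ys) - u g) * (badahead g (xs @ ys) - u g + 1) \<le> 2 * C g"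
    using le_trans[OF mono_term[OF ba_rem[OF ne]] I] .
qed

lemma inv_ins_good:
  assumes "Inv s u C" "x \<notin> fst ` set s"
  shows "Inv (s @ [(x,True)]) (u(x := nbad s)) (C(x:=0))"
  unfolding Inv_def
proof (intro allI impI)
  fix g assume g: "(g, True) \<in> set (s @ [(x,True)])"
  show "(badahead g (s @ [(x, True)]) - (u(x := nbad s)) g) *
          (badahead g (s @ [(x, True)]) - (u(x := nbad s)) g + 1) \<le> 2 * (C(x := 0)) g"
  proof (cases "g = x")
    case True then show ?thesis using assms(2) by (simp add: ba_append_notin ba_cons_self)
  next
    case False
    then have m: "(g,True) \<in> set s" using g by auto
    then have "g \<in> fst ` set s" by force
    then show ?thesis using assms(1) m False unfolding Inv_def by (simp add: ba_append_in)
  qed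
qed

lemma inv_ins_bad:
  assumes "Inv s u C"
  shows "Inv (s @ [(x,False)]) u C"
  unfolding Inv_def
proof (intro allI impI)
  fix g assume g: "(g, True) \<in> set (s @ [(x,False)])"
  then have m: "(g,True) \<in> set s" by auto
  then have "g \<in> fst ` set s" by force
  then show "(badahead g (s @ [(x, False)]) - u g) *
          (badahead g (s @ [(x, False)]) - u g + 1) \<le> 2 * C g"
    using assms(1) m unfolding Inv_def by (simp add: ba_append_in)
qed


definition Good :: "obj list \<Rightarrow> req list \<Rightarrow> (nat \<Rightarrow> nat) \<Rightarrow> (nat \<Rightarrow> nat) \<Rightarrow> nat list \<Rightarrow> bool" where
  "Good s rs u C zs \<longleftrightarrow> length zs = total good_qry_count s rs \<and>
     total good_qry_cost s rs \<le> maxgood s rs * length zs + PhiU s u + total good_ins_cost s rs + sum_list zs \<and>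
     sum_list (map (\<lambda>x. x*(x+1)) zs) \<le> 2 * PhiU s C + 2 * maxgood s rs * total bad_cost s rs"

lemma maxgood_ge: "ngood s \<le> maxgood s rs"
  by (cases rs) auto

lemma nbad_le: "nbad s \<le> length s"
  using nbad_ngood[of s] by simp

lemma ngood_app: "ngood (a @ b) = ngood a + ngood b"
  by (simp add: ngood_def)

lemma ngood_cons: "ngood (z # b) = (if snd z then 1 else 0) + ngood b"
  by (simp add: ngood_def)

lemma combine:
  assumes G: "Good (step s r) rs u' C' zs"
  and c: "good_qry_count s r = length zs0"
  and i1: "good_qry_cost s r + PhiU (step s r) u' \<le> maxgood s (r#rs) * length zs0 + PhiU s u + good_ins_cost s r + sum_list zs0"
  and i2: "sum_list (map (\<lambda>x. x*(x+1)) zs0) + 2 * PhiU (step s r) C' \<le> 2 * PhiU s C + 2 * maxgood s (r#rs) * bad_cost s r"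
  shows "Good s (r#rs) u C (zs0 @ zs)"
proof -
  define M where "M = maxgood s (r#rs)"
  define M' where "M' = maxgood (step s r) rs"
  have MM: "M' \<le> M" unfolding M_def M'_def by simp
  have a: "M' * length zs \<le> M * length zs" using MM by simp
  have b: "M' * total bad_cost (step s r) rs \<le> M * total bad_cost (step s r) rs" using MM by simp
  have G': "length zs = total good_qry_count (step s r) rs"
    "total good_qry_cost (step s r) rs \<le> M' * length zs + PhiU (step s r) u' + total good_ins_cost (step s r) rs + sum_list zs"
    "sum_list (map (\<lambda>x. x*(x+1)) zs) \<le> 2 * PhiU (step s r) C' + 2 * M' * total bad_cost (step s r) rs"
    using G unfolding Good_def M'_def by auto
  have i1': "good_qry_cost s r + PhiU (step s r) u' \<le> M * length zs0 + PhiU s u + good_ins_cost s r + sum_list zs0"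
    using i1 unfolding M_def .
  have i2': "sum_list (map (\<lambda>x. x*(x+1)) zs0) + 2 * PhiU (step s r) C' \<le> 2 * PhiU s C + 2 * M * bad_cost s r"
    using i2 unfolding M_def .
  have "total good_qry_cost s (r#rs) \<le> M * length (zs0 @ zs) + PhiU s u + total good_ins_cost s (r#rs) + sum_list (zs0 @ zs)"
  proof -
    have e: "total good_qry_cost s (r#rs) = good_qry_cost s r + total good_qry_cost (step s r) rs"
      "total good_ins_cost s (r#rs) = good_ins_cost s r + total good_ins_cost (step s r) rs"
      "M * length (zs0 @ zs) = M * length zs0 + M * length zs"
      "sum_list (zs0 @ zs) = sum_list zs0 + sum_list zs" by (simp_all add: algebra_simps)
    show ?thesis using G'(2) a i1' e by linarith
  qed
  moreover have "sum_list (map (\<lambda>x. x*(x+1)) (zs0 @ zs)) \<le> 2 * PhiU s C + 2 * M * total bad_cost s (r#rs)"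
  proof -
    have e: "total bad_cost s (r#rs) = bad_cost s r + total bad_cost (step s r) rs"
      "2 * M * total bad_cost s (r#rs) = 2 * M * bad_cost s r + 2 * (M * total bad_cost (step s r) rs)"
      "2 * M' * total bad_cost (step s r) rs = 2 * (M' * total bad_cost (step s r) rs)"
      "sum_list (map (\<lambda>x. x*(x+1)) (zs0 @ zs)) = sum_list (map (\<lambda>x. x*(x+1)) zs0) + sum_list (map (\<lambda>x. x*(x+1)) zs)"
      by (simp_all add: algebra_simps)
    show ?thesis using G'(3) b i2' e by linarith
  qed
  moreover have "length (zs0 @ zs) = total good_qry_count s (r#rs)" using G'(1) c by simp
  ultimately show ?thesis unfolding Good_def M_def by blast
qed

lemma main:
  "valid s rs \<Longrightarrow> distinct (map fst s) \<Longrightarrow> Inv s u C \<Longrightarrow> \<exists>zs. Good s rs u C zs"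
proof (induction rs arbitrary: s u C)
  case Nil
  show ?case by (rule exI[of _ "[]"]) (simp add: Good_def)
next
  case (Cons r rs)
  define M where "M = maxgood s (r # rs)"
  have M': "ngood s \<le> M" by (simp add: M_def)
  have vr: "ok s r" "valid (step s r) rs" using Cons.prems(1) by auto
  note dist = Cons.prems(2)
  note inv = Cons.prems(3)
  show ?case
  proof (cases r)
    case (GIns x)
    have nx: "x \<notin> fst ` set s" using vr(1) GIns by (simp add: present_def)
    have d': "distinct (map fst (step s r))" using dist nx GIns by auto
    obtain zs where G: "Good (step s r) rs (u(x := nbad s)) (C(x:=0)) zs"
      using Cons.IH[OF vr(2) d'] inv_ins_good[OF inv nx] GIns by auto
    have P1: "PhiU (step s r) (u(x := nbad s)) = PhiU s u + nbad s"
      using GIns nx by (simp add: PhiU_app PhiU_upd PhiU_cons)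
    have P2: "PhiU (step s r) (C(x:=0)) = PhiU s C"
      using GIns nx by (simp add: PhiU_app PhiU_upd PhiU_cons)
    have "Good s (r#rs) u C ([] @ zs)"
      by (rule combine[OF G]) (use P1 P2 nbad_le[of s] GIns in auto)
    then show ?thesis by auto
  next
    case (BIns x)
    have nx: "x \<notin> fst ` set s" using vr(1) BIns by (simp add: present_def)
    have d': "distinct (map fst (step s r))" using dist nx BIns by auto
    obtain zs where G: "Good (step s r) rs u C zs"
      using Cons.IH[OF vr(2) d'] inv_ins_bad[OF inv, of x] BIns by auto
    have P1: "PhiU (step s r) u = PhiU s u" "PhiU (step s r) C = PhiU s C"
      using BIns by (simp_all add: PhiU_app PhiU_cons)
    have "Good s (r#rs) u C ([] @ zs)"
      by (rule combine[OF G]) (use P1 BIns in auto)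
    then show ?thesis by auto
  next
    case (GQry x)
    have mem: "(x,True) \<in> set s" using vr(1) GQry by simp
    obtain as bs where sd: "s = as @ (x,True) # bs" and na: "x \<notin> fst ` set as" and nb: "x \<notin> fst ` set bs"
      using decomp[OF mem dist] by blast
    have pr: "present x s" using mem by (force simp: present_def)
    have st: "step s r = (x,True) # as @ bs" using GQry pr sd na nb by (simp add: mtf_dec)
    have d': "distinct (map fst (step s r))" using dist st sd by auto
    obtain zs where G: "Good (step s r) rs (u(x := 0)) (C(x:=0)) zs"
      using Cons.IH[OF vr(2) d'] inv_gq[OF inv[unfolded sd] na nb] st by auto
    define b where "b = badahead x s"
    have bd: "b = nbad as" using na unfolding b_def sd by (simp add: badahead_def nbad_def tw_xs)
    have dep: "good_qry_cost s r = length as + 1" using GQry pr sd na by (simp add: qcost_def depth_dec)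
    have ng: "ngood s = ngood as + 1 + ngood bs" using sd by (simp add: ngood_app ngood_cons)
    have c1: "good_qry_cost s r \<le> M + u x + (b - u x)"
      using dep ng bd nbad_ngood[of as] M' by simp
    have IV: "(b - u x) * (b - u x + 1) \<le> 2 * C x" using inv mem unfolding Inv_def b_def by auto
    have P1: "PhiU s u = PhiU (step s r) (u(x:=0)) + u x"
      using st sd na nb by (simp add: PhiU_app PhiU_upd PhiU_cons)
    have P2: "PhiU s C = PhiU (step s r) (C(x:=0)) + C x"
      using st sd na nb by (simp add: PhiU_app PhiU_upd PhiU_cons)
    have "Good s (r#rs) u C ([b - u x] @ zs)"
      by (rule combine[OF G]) (use P1 P2 c1 IV GQry in \<open>auto simp: M_def\<close>)
    then show ?thesis by blast
  next
    case (GDel x)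
    have mem: "(x,True) \<in> set s" using vr(1) GDel by simp
    obtain as bs where sd: "s = as @ (x,True) # bs" and na: "x \<notin> fst ` set as" and nb: "x \<notin> fst ` set bs"
      using decomp[OF mem dist] by blast
    have pr: "present x s" using mem by (force simp: present_def)
    have st: "step s r = as @ bs" using GDel pr sd na nb by (simp add: rem_dec)
    have d': "distinct (map fst (step s r))" using dist st sd by auto
    obtain zs where G: "Good (step s r) rs u C zs"
      using Cons.IH[OF vr(2) d'] inv_del[OF inv[unfolded sd] na nb] st by auto
    have P1: "PhiU (step s r) u \<le> PhiU s u" "PhiU (step s r) C \<le> PhiU s C"
      using st sd by (simp_all add: PhiU_app PhiU_cons)
    have "Good s (r#rs) u C ([] @ zs)"
      by (rule combine[OF G]) (use P1 GDel in auto)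
    then show ?thesis by auto
  next
    case (BQry x)
    show ?thesis
    proof (cases "present x s")
      case False
      then have st: "step s r = s" using BQry by simp
      obtain zs where G: "Good (step s r) rs u C zs"
        using Cons.IH[OF vr(2)] dist inv st by auto
      have "Good s (r#rs) u C ([] @ zs)"
        by (rule combine[OF G]) (use st BQry in auto)
      then show ?thesis by auto
    next
      case True
      then obtain v where mem: "(x,v) \<in> set s" by (auto simp: present_def)
      obtain as bs where sd: "s = as @ (x,v) # bs" and na: "x \<notin> fst ` set as" and nb: "x \<notin> fst ` set bs"
        using decomp[OF mem dist] by blast
      have st: "step s r = (x,v) # as @ bs" using BQry True sd na nb by (simp add: mtf_dec)
      have d': "distinct (map fst (step s r))" using dist st sd by auto
      have bc: "bad_cost s r = length as + 1" using BQry True sd na by (simp add: qcost_def depth_dec)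
      show ?thesis
      proof (cases v)
        case True
        then have "v = True" by simp
        obtain zs where G: "Good (step s r) rs u C zs"
          using Cons.IH[OF vr(2) d'] inv_bq_good[OF inv[unfolded sd \<open>v = True\<close>] na nb] st True by auto
        have P1: "PhiU (step s r) u = PhiU s u" "PhiU (step s r) C = PhiU s C"
          using st sd by (simp_all add: PhiU_app PhiU_cons)
        have "Good s (r#rs) u C ([] @ zs)"
          by (rule combine[OF G]) (use P1 BQry in auto)
        then show ?thesis by auto
      next
        case False
        then have "v = False" by simp
        define d where "d = length as + 1"
        obtain zs where G: "Good (step s r) rs u (\<lambda>g. C g + d) zs"
          using Cons.IH[OF vr(2) d'] inv_bq_bad[OF inv[unfolded sd \<open>v = False\<close>] na nb] st False
          unfolding d_def by auto
        have ng: "ngood (step s r) = ngood s" using st sd by (simp add: ngood_app ngood_cons)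
        have P1: "PhiU (step s r) u = PhiU s u" "PhiU (step s r) C = PhiU s C"
          using st sd by (simp_all add: PhiU_app PhiU_cons)
        have nd: "ngood s * d \<le> M * d" using M' by simp
        have P2: "PhiU (step s r) (\<lambda>g. C g + d) \<le> PhiU s C + M * d"
          using PhiU_plus[of "step s r" C d] P1 ng nd by simp
        have "Good s (r#rs) u C ([] @ zs)"
          by (rule combine[OF G]) (use P1 P2 bc BQry in \<open>auto simp: M_def d_def\<close>)
        then show ?thesis by auto
      qed
    qed
  next
    case (BDel x)
    show ?thesis
    proof (cases "present x s")
      case False
      then have st: "step s r = s" using BDel by simp
      obtain zs where G: "Good (step s r) rs u C zs"
        using Cons.IH[OF vr(2)] dist inv st by auto
      have "Good s (r#rs) u C ([] @ zs)"
        by (rule combine[OF G]) (use st BDel in auto)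
      then show ?thesis by auto
    next
      case True
      then obtain v where mem: "(x,v) \<in> set s" by (auto simp: present_def)
      obtain as bs where sd: "s = as @ (x,v) # bs" and na: "x \<notin> fst ` set as" and nb: "x \<notin> fst ` set bs"
        using decomp[OF mem dist] by blast
      have st: "step s r = as @ bs" using BDel True sd na nb by (simp add: rem_dec)
      have d': "distinct (map fst (step s r))" using dist st sd by auto
      obtain zs where G: "Good (step s r) rs u C zs"
        using Cons.IH[OF vr(2) d'] inv_del[OF inv[unfolded sd] na nb] st by auto
      have P1: "PhiU (step s r) u \<le> PhiU s u" "PhiU (step s r) C \<le> PhiU s C"
        using st sd by (simp_all add: PhiU_app PhiU_cons)
      have "Good s (r#rs) u C ([] @ zs)"
        by (rule combine[OF G]) (use P1 BDel in auto)
      then show ?thesis by auto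
    qed
  qed
qed

lemma lat_le_cost: "total good_qry_latency s rs \<le> total good_qry_cost s rs"
proof (induction rs arbitrary: s)
  case Nil then show ?case by simp
next
  case (Cons r rs)
  have "good_qry_latency s r \<le> good_qry_cost s r"
    by (cases r) (auto simp: qcost_def)
  with Cons.IH[of "step s r"] show ?case by simp
qed

lemma sq_expand:
  fixes t :: real
  shows "(\<Sum>x\<leftarrow>xs. (x - t)^2) = (\<Sum>x\<leftarrow>xs. x^2) - 2 * t * sum_list xs + real (length xs) * t^2"
  by (induction xs) (auto simp: algebra_simps power2_eq_square)

lemma cs_list:
  fixes xs :: "real list"
  shows "(sum_list xs)^2 \<le> real (length xs) * (\<Sum>x\<leftarrow>xs. x^2)"
proof (cases "length xs = 0")
  case True then show ?thesis by simp
next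
  case False
  define n where "n = real (length xs)"
  define S where "S = sum_list xs"
  define Q where "Q = (\<Sum>x\<leftarrow>xs. x^2)"
  have n: "n > 0" using False n_def by simp
  have "0 \<le> (\<Sum>x\<leftarrow>xs. (x - S/n)^2)" by (induction xs) auto
  also have "\<dots> = Q - 2 * (S/n) * S + n * (S/n)^2"
    unfolding sq_expand Q_def S_def n_def ..
  also have "\<dots> = Q - S^2 / n" using n by (simp add: field_simps power2_eq_square)
  finally have "S^2 / n \<le> Q" by simp
  then have "S^2 \<le> n * Q" using n by (simp add: field_simps)
  then show ?thesis unfolding S_def n_def Q_def .
qed

lemma cs_nat:
  fixes zs :: "nat list"
  shows "(real (sum_list zs))^2 \<le> real (length zs) * real (\<Sum>x\<leftarrow>zs. x*(x+1))"
proof -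
  have a: "real (sum_list zs) = sum_list (map real zs)" by (induction zs) auto
  have b: "(\<Sum>x\<leftarrow>map real zs. x^2) \<le> real (\<Sum>x\<leftarrow>zs. x*(x+1))"
    by (induction zs) (auto simp: power2_eq_square algebra_simps)
  have "(real (sum_list zs))^2 \<le> real (length zs) * (\<Sum>x\<leftarrow>map real zs. x^2)"
    using cs_list[of "map real zs"] a by simp
  also have "\<dots> \<le> real (length zs) * real (\<Sum>x\<leftarrow>zs. x*(x+1))"
    using b by (intro mult_left_mono) auto
  finally show ?thesis .
qed

lemma final_arith:
  fixes S q l B P :: real
  assumes "S \<ge> 0" "q \<ge> 0" "l \<ge> 0" "B \<ge> 0" "S^2 \<le> q * P" "P \<le> 2 * l * B"
    "l = 0 \<or> l \<ge> 1"
  shows "S \<le> l * sqrt (2 * q * B)"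
proof (cases "l = 0")
  case True
  then have "S^2 \<le> 0" using assms
    by (metis mult_left_mono mult_zero_left mult_zero_right order_trans)
  then have "S = 0" using assms(1) by (metis antisym not_le power2_less_0 zero_le_power2 power_zero_numeral pos2 power_eq_0_iff order_le_less)
  then show ?thesis using True by simp
next
  case False
  then have l1: "l \<ge> 1" using assms(7) by simp
  have "S^2 \<le> q * (2 * l * B)" using assms(5,6) assms(2) by (meson mult_left_mono order_trans)
  also have "\<dots> \<le> q * (2 * (l*l) * B)"
  proof -
    have "l * B \<le> (l*l) * B" using l1 assms(4) by (intro mult_right_mono) auto
    then show ?thesis using assms(2) by (intro mult_left_mono) (auto simp: mult.assoc)
  qed
  also have "\<dots> = (l * sqrt (2*q*B))^2"
    using assms(2,4) by (simp add: power_mult_distrib power2_eq_square)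
  finally have "S^2 \<le> (l * sqrt (2*q*B))^2" .
  moreover have "0 \<le> l * sqrt (2*q*B)" using assms(2,3,4) by simp
  ultimately show ?thesis by (rule power2_le_imp_le)
qed

theorem lemma6:
  fixes rs :: "req list"
  assumes "valid [] rs"
  defines "A \<equiv> real (total good_ins_cost [] rs)"
      and "B \<equiv> real (total bad_cost [] rs)"
      and "q \<equiv> real (total good_qry_count [] rs)"
      and "ell \<equiv> real (maxgood [] rs)"
  shows "real (total good_qry_cost [] rs) \<le> A + ell * (q + sqrt (2 * q * B)) \<and>
         real (total good_qry_latency [] rs) \<le> A + ell * (q + sqrt (2 * q * B))"
proof -
  have inv0: "Inv [] (\<lambda>_. 0) (\<lambda>_. 0)" by (simp add: Inv_def)
  obtain zs where G: "Good [] rs (\<lambda>_. 0) (\<lambda>_. 0) zs" using main[OF assms(1) _ inv0] by auto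
  define P where "P = (\<Sum>x\<leftarrow>zs. x*(x+1))"
  have g1: "length zs = total good_qry_count [] rs" using G unfolding Good_def by simp
  have g2: "total good_qry_cost [] rs \<le> maxgood [] rs * length zs + total good_ins_cost [] rs + sum_list zs"
    using G unfolding Good_def by (simp del: total.simps) (metis le_refl)
  have g3: "P \<le> 2 * maxgood [] rs * total bad_cost [] rs"
    using G unfolding Good_def P_def by simp
  have r2: "real (total good_qry_cost [] rs) \<le> ell * q + A + real (sum_list zs)"
    using g2 g1 unfolding ell_def q_def A_def by (metis of_nat_add of_nat_le_iff of_nat_mult)
  have r3: "real P \<le> 2 * ell * B" using g3 unfolding ell_def B_def
    by (metis of_nat_le_iff of_nat_mult of_nat_numeral)
  have cs: "(real (sum_list zs))^2 \<le> q * real P" using cs_nat[of zs] g1 unfolding q_def P_def by simp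
  have l01: "ell = 0 \<or> ell \<ge> 1" unfolding ell_def by (cases "maxgood [] rs") auto
  have S: "real (sum_list zs) \<le> ell * sqrt (2 * q * B)"
    by (rule final_arith[OF _ _ _ _ cs r3 l01]) (auto simp: q_def ell_def B_def)
  have c: "real (total good_qry_cost [] rs) \<le> A + ell * (q + sqrt (2 * q * B))"
    using r2 S by (simp add: algebra_simps)
  moreover have "real (total good_qry_latency [] rs) \<le> real (total good_qry_cost [] rs)"
    using lat_le_cost by simp
  ultimately show ?thesis by linarith
qed

end
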